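(* Let $G$ be a simple connected graph with $n\ge 3$ vertices and $m$ edges, and let $c=m-n+1$. If $c\le (n-1)/2$, then $$\rho_{ABC}(G)\le \sqrt{n-2+\frac{2c}{n-1}}.$$
   Context: For a simple connected graph $G$ with vertex set $\{v_1,\dots,v_n\}$ and degrees $d_i$, the ABC matrix is $M(G)=(m_{ij})_{n\times n}$ with $m_{ij}=\sqrt{(d_i+d_j-2)/(d_id_j)}$ if $v_iv_j$ is an edge and $m_{ij}=0$ otherwise. The ABC spectral radius $\rho_{ABC}(G)$ is the largest eigenvalue of $M(G)$. A connected graph with $n$ vertices and $m$ edges is called $c$-cyclic where $c=m-n+1$. *)

theory Defs
  imports "HOL-Analysis.Analysis"
begin

definition simple_graph :: "('n::finite \<Rightarrow> 'n \<Rightarrow> bool) \<Rightarrow> bool" where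
  "simple_graph E \<longleftrightarrow> (\<forall>u v. E u v \<longrightarrow> E v u) \<and> (\<forall>v. \<not> E v v)"

definition connected_graph :: "('n::finite \<Rightarrow> 'n \<Rightarrow> bool) \<Rightarrow> bool" where
  "connected_graph E \<longleftrightarrow> (\<forall>u v. E\<^sup>*\<^sup>* u v)"

definition degree :: "('n::finite \<Rightarrow> 'n \<Rightarrow> bool) \<Rightarrow> 'n \<Rightarrow> nat" where
  "degree E v = card {u. E v u}"

definition num_edges :: "('n::finite \<Rightarrow> 'n \<Rightarrow> bool) \<Rightarrow> nat" where
  "num_edges E = card {{u, v} | u v. E u v}"

definition abc_matrix :: "('n::finite \<Rightarrow> 'n \<Rightarrow> bool) \<Rightarrow> real^'n^'n" where
  "abc_matrix E = (\<chi> i j. if E i j then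
      sqrt ((real (degree E i) + real (degree E j) - 2) / (real (degree E i) * real (degree E j)))
      else 0)"

definition eigenvalues :: "real^'n^'n \<Rightarrow> real set" where
  "eigenvalues M = {\<mu>. \<exists>x. x \<noteq> 0 \<and> M *v x = \<mu> *\<^sub>R x}"

definition abc_spectral_radius :: "('n::finite \<Rightarrow> 'n \<Rightarrow> bool) \<Rightarrow> real" where
  "abc_spectral_radius E = Max (eigenvalues (abc_matrix E))"

end

theory Submission
  imports Defs
begin

lemma sym_inner:
  fixes M :: "real^'n^'n"
  assumes sym: "\<And>i j. M$i$j = M$j$i"
  shows "(M *v x) \<bullet> y = x \<bullet> (M *v y)"
proof -
  have "transpose M = M" using sym by (simp add: vec_eq_iff transpose_def)
  then have "M *v x = x v* M" by (metis transpose_matrix_vector)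
  then show ?thesis by (simp add: dot_lmul_matrix)
qed

lemma sym_eig_exists:
  fixes M :: "real^'n^'n"
  assumes sym: "\<And>i j. M$i$j = M$j$i"
  shows "\<exists>\<mu> x. x \<noteq> 0 \<and> M *v x = \<mu> *\<^sub>R x"
proof -
  define f where "f x = x \<bullet> (M *v x)" for x :: "real^'n"
  have cont: "continuous_on (sphere 0 1) f" unfolding f_def
    by (intro continuous_intros matrix_vector_mult_linear_continuous_on)
  have ne: "sphere (0::real^'n) 1 \<noteq> {}" by (simp add: sphere_eq_empty)
  obtain x0 where x0: "x0 \<in> sphere 0 1" and mx: "\<And>y. y \<in> sphere 0 1 \<Longrightarrow> f y \<le> f x0"
    using continuous_attains_sup[OF compact_sphere ne cont] by blast
  define l where "l = f x0"
  have nx0: "norm x0 = 1" using x0 by simp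
  have x0x0: "x0 \<bullet> x0 = 1" using nx0 by (simp add: dot_square_norm)
  have fscale: "f (c *\<^sub>R y) = c^2 * f y" for c y
    by (simp add: f_def matrix_vector_mult_scaleR power2_eq_square)
  have le: "f y \<le> l * (y \<bullet> y)" for y
  proof (cases "y = 0")
    case True then show ?thesis by (simp add: f_def)
  next
    case False
    then have ny: "norm y > 0" by simp
    have "(inverse (norm y)) *\<^sub>R y \<in> sphere 0 1" using ny by simp
    then have "f ((inverse (norm y)) *\<^sub>R y) \<le> l" using mx l_def by blast
    then have "(inverse (norm y))^2 * f y \<le> l" by (simp add: fscale)
    then have "f y \<le> l * (norm y)^2" using ny
      by (simp add: field_simps power2_eq_square)
    then show ?thesis by (simp add: dot_square_norm)
  qed
  define A where "A y = l *\<^sub>R y - M *v y" for y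
  have Asym: "(A u) \<bullet> v = u \<bullet> (A v)" for u v
    unfolding A_def by (simp add: inner_diff_left inner_diff_right sym_inner[OF sym])
  have gnn: "0 \<le> y \<bullet> A y" for y
    using le[of y] by (simp add: A_def f_def inner_diff_right)
  define z where "z = A x0"
  have x0z: "x0 \<bullet> z = 0" unfolding z_def A_def l_def f_def
    by (simp add: inner_diff_right x0x0)
  have Alin: "A (x0 - t *\<^sub>R z) = z - t *\<^sub>R A z" for t
    unfolding A_def z_def by (simp add: matrix_vector_mult_diff_distrib matrix_vector_mult_scaleR algebra_simps)
  define a where "a = z \<bullet> z"
  define b where "b = z \<bullet> A z"
  have b0: "b \<ge> 0" unfolding b_def by (rule gnn)
  have x0Az: "x0 \<bullet> A z = a" unfolding a_def using Asym[of x0 z] z_def by simp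
  have expand: "0 \<le> - 2 * t * a + t^2 * b" for t
  proof -
    have "0 \<le> (x0 - t *\<^sub>R z) \<bullet> A (x0 - t *\<^sub>R z)" by (rule gnn)
    also have "\<dots> = (x0 - t *\<^sub>R z) \<bullet> (z - t *\<^sub>R A z)" by (simp add: Alin)
    also have "\<dots> = - 2 * t * a + t^2 * b"
      by (simp add: inner_diff_left inner_diff_right x0z x0Az a_def b_def power2_eq_square inner_commute algebra_simps)
    finally show ?thesis .
  qed
  have "a = 0"
  proof -
    define t where "t = a/(b+1)"
    have at: "a = t * (b+1)" using b0 by (simp add: t_def)
    have "0 \<le> - 2 * t * a + t^2 * b" by (rule expand)
    also have "\<dots> = - (t*t) * (b+2)" by (simp add: at power2_eq_square algebra_simps)
    finally have "t * t * (b+2) \<le> 0" by simp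
    moreover have "t * t \<ge> 0" by simp
    moreover have "t * t * 2 \<le> t * t * (b+2)" using b0 by (intro mult_left_mono) auto
    ultimately have "t * t = 0" by linarith
    then show ?thesis using at by simp
  qed
  then have "z = 0" by (simp add: a_def)
  then have "M *v x0 = l *\<^sub>R x0" by (simp add: z_def A_def)
  moreover have "x0 \<noteq> 0" using nx0 by auto
  ultimately show ?thesis by blast
qed

lemma sym_eig_finite:
  fixes M :: "real^'n^'n"
  assumes sym: "\<And>i j. M$i$j = M$j$i"
  shows "finite (eigenvalues M)"
proof -
  define S where "S = eigenvalues M"
  define v where "v \<mu> = (SOME x. x \<noteq> 0 \<and> M *v x = \<mu> *\<^sub>R x)" for \<mu>
  have v: "v \<mu> \<noteq> 0 \<and> M *v v \<mu> = \<mu> *\<^sub>R v \<mu>" if "\<mu> \<in> S" for \<mu>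
    using that unfolding S_def eigenvalues_def v_def by (metis (mono_tags, lifting) mem_Collect_eq someI_ex)
  have inj: "inj_on v S"
  proof (rule inj_onI)
    fix p q assume "p \<in> S" "q \<in> S" "v p = v q"
    then have "p *\<^sub>R v p = q *\<^sub>R v p" "v p \<noteq> 0" using v by metis+
    then show "p = q" by (metis scaleR_cancel_right)
  qed
  have orth: "pairwise orthogonal (v ` S)"
  proof (rule pairwiseI)
    fix x y assume "x \<in> v ` S" "y \<in> v ` S" "x \<noteq> y"
    then obtain p q where pq: "p \<in> S" "q \<in> S" "x = v p" "y = v q" "p \<noteq> q" by blast
    have "(M *v x) \<bullet> y = x \<bullet> (M *v y)" by (rule sym_inner[OF sym])
    then have "p * (x \<bullet> y) = q * (x \<bullet> y)" using v pq by simp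
    then have "x \<bullet> y = 0" using pq by simp
    then show "orthogonal x y" by (simp add: orthogonal_def)
  qed
  have "0 \<notin> v ` S" using v by auto
  then have "independent (v ` S)" using orth pairwise_orthogonal_independent by blast
  then have "finite (v ` S)" using finiteI_independent by blast
  then show ?thesis using finite_imageD inj S_def by blast
qed

lemma alg:
  fixes d s n m :: real
  assumes "1 \<le> d" "d \<le> n - 1" "n \<ge> 3" "s \<le> d * (n - 1)" "s \<le> 2 * m - n + 1"
  shows "d * (d - 2) + s \<le> (n - 2 + 2 * (m - n + 1) / (n - 1)) * d"
proof -
  define c where "c = m - n + 1"
  have n1: "n - 1 > 0" using assms by simp
  have key: "(n - 1) * (d * (d - 2) + s) \<le> (n - 1) * (n - 2) * d + 2 * c * d"
  proof (cases "d * (n - 1) \<le> n - 1 + 2 * c")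
    case True
    have "(n - 1) * (d * (d - 2) + s) \<le> (n - 1) * (d * (d - 2) + d * (n - 1))"
      using assms(4) n1 by (intro mult_left_mono) auto
    moreover have "0 \<le> d * (n - 1 + 2 * c - d * (n - 1))"
      using True assms(1) by (intro mult_nonneg_nonneg) auto
    ultimately show ?thesis by (simp add: algebra_simps)
  next
    case False
    have "(n - 1) * (d * (d - 2) + s) \<le> (n - 1) * (d * (d - 2) + (n - 1 + 2 * c))"
      using assms(5) n1 unfolding c_def by (intro mult_left_mono) auto
    moreover have "((n - 1) * d - (n - 1 + 2 * c)) * (d - (n - 1)) \<le> 0"
      using False assms(2) by (intro mult_nonneg_nonpos) (auto simp: algebra_simps)
    ultimately show ?thesis by (simp add: algebra_simps)
  qed
  have "(n - 2 + 2 * c / (n - 1)) * d * (n - 1) = (n - 1) * (n - 2) * d + 2 * c * d"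
    using n1 by (simp add: field_simps)
  then have "(n - 1) * (d * (d - 2) + s) \<le> (n - 1) * ((n - 2 + 2 * c / (n - 1)) * d)"
    using key by (simp add: algebra_simps)
  then show ?thesis using n1 unfolding c_def by simp
qed

lemma deg_le:
  fixes E :: "'n::finite \<Rightarrow> 'n \<Rightarrow> bool"
  assumes "simple_graph E"
  shows "degree E v \<le> CARD('n::finite) - 1"
proof -
  have "{u. E v u} \<subseteq> UNIV - {v}" using assms by (auto simp: simple_graph_def)
  then have "card {u. E v u} \<le> card (UNIV - {v} :: 'n set)" by (intro card_mono) auto
  then show ?thesis by (simp add: degree_def card_Diff_singleton)
qed

lemma deg_ge:
  fixes E :: "'n::finite \<Rightarrow> 'n \<Rightarrow> bool"
  assumes "simple_graph E" "connected_graph E" "CARD('n::finite) \<ge> 2"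
  shows "degree E (v::'n) \<ge> 1"
proof -
  have "card (UNIV - {v} :: 'n set) \<ge> 1" using assms(3) by (simp add: card_Diff_singleton)
  then have "UNIV - {v} \<noteq> ({} :: 'n set)" by (metis card.empty not_one_le_zero)
  then obtain u :: 'n where "u \<noteq> v" by blast
  moreover have "E\<^sup>*\<^sup>* v u" using assms(2) by (simp add: connected_graph_def)
  ultimately obtain k where "E v k" by (metis converse_rtranclpE)
  then have "{u. E v u} \<noteq> {}" by auto
  then have "card {u. E v u} \<noteq> 0" by simp
  then show ?thesis unfolding degree_def by linarith
qed

lemma handshake:
  assumes "simple_graph E"
  shows "(\<Sum>v\<in>UNIV. degree E (v::'n::finite)) = 2 * num_edges E"
proof -
  define Ed where "Ed = {{u, v} | u v. E u v}"
  have fin: "finite Ed" by simp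
  have "(\<Sum>e\<in>Ed. card {v\<in>UNIV. v \<in> e}) = (\<Sum>v\<in>UNIV. card {e\<in>Ed. v \<in> e})"
    by (rule sum_multicount_gen) auto
  moreover have "(\<Sum>e\<in>Ed. card {v\<in>UNIV. v \<in> e}) = (\<Sum>e\<in>Ed. 2)"
  proof (rule sum.cong)
    fix e assume "e \<in> Ed"
    then obtain u v where "e = {u, v}" "E u v" unfolding Ed_def by blast
    moreover then have "u \<noteq> v" using assms by (auto simp: simple_graph_def)
    moreover have "{x\<in>UNIV. x \<in> e} = e" by simp
    ultimately show "card {v\<in>UNIV. v \<in> e} = 2" by simp
  qed simp
  moreover have "card {e\<in>Ed. v \<in> e} = degree E v" for v
  proof -
    have "{e\<in>Ed. v \<in> e} = (\<lambda>u. {v, u}) ` {u. E v u}"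
    proof
      show "{e\<in>Ed. v \<in> e} \<subseteq> (\<lambda>u. {v, u}) ` {u. E v u}"
      proof
        fix e assume "e \<in> {e\<in>Ed. v \<in> e}"
        then obtain a b where ab: "e = {a, b}" "E a b" "v \<in> e" unfolding Ed_def by blast
        then show "e \<in> (\<lambda>u. {v, u}) ` {u. E v u}"
          using assms unfolding simple_graph_def by (auto simp: insert_commute)
      qed
      show "(\<lambda>u. {v, u}) ` {u. E v u} \<subseteq> {e\<in>Ed. v \<in> e}" unfolding Ed_def by blast
    qed
    moreover have "inj_on (\<lambda>u. {v, u}) {u. E v u}" by (auto simp: inj_on_def doubleton_eq_iff)
    ultimately show ?thesis by (simp add: card_image degree_def)
  qed
  ultimately show ?thesis by (simp add: num_edges_def Ed_def)
qed

lemma eig_bound: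
  fixes E :: "'n::finite \<Rightarrow> 'n \<Rightarrow> bool"
  assumes sg: "simple_graph E" and cg: "connected_graph E" and n3: "CARD('n) \<ge> 3"
    and ev: "abc_matrix E *v x = \<mu> *\<^sub>R x" and xnz: "x \<noteq> 0"
  shows "\<mu> \<le> sqrt (real CARD('n) - 2 + 2 * (real (num_edges E) - real CARD('n) + 1) / (real CARD('n) - 1))"
proof -
  define M where "M = abc_matrix E"
  define d where "d j = real (degree E j)" for j
  define n where "n = real CARD('n)"
  define m where "m = real (num_edges E)"
  define w where "w j = sqrt (d j)" for j
  define N where "N j = {u. E j u}" for j
  have d1: "d j \<ge> 1" for j using deg_ge[OF sg cg, of j] n3 unfolding d_def by simp
  have dn: "d j \<le> n - 1" for j
  proof -
    have "degree E j \<le> CARD('n) - 1" by (rule deg_le[OF sg])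
    then have "real (degree E j) \<le> real (CARD('n) - 1)" by linarith
    then show ?thesis using n3 unfolding d_def n_def by (simp add: of_nat_diff)
  qed
  have wpos: "w j > 0" for j using d1[of j] unfolding w_def by simp
  have ww: "w j * w j = d j" for j using d1[of j] unfolding w_def by simp
  have Mij: "M$i$j = (if E i j then sqrt ((d i + d j - 2) / (d i * d j)) else 0)" for i j
    unfolding M_def abc_matrix_def d_def by simp
  have Mnn: "M$i$j \<ge> 0" for i j
  proof -
    have "(d i + d j - 2) / (d i * d j) \<ge> 0" using d1[of i] d1[of j] by simp
    then show ?thesis by (simp add: Mij)
  qed
  have Mw: "M$i$j * w j = sqrt (d i + d j - 2) / w i" if "E i j" for i j
  proof -
    have "(d i + d j - 2) / (d i * d j) * d j = (d i + d j - 2) / d i"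
    proof -
      have "d i \<noteq> 0" "d j \<noteq> 0" using d1[of i] d1[of j] by auto
      then show ?thesis by (simp add: field_simps)
    qed
    then have "sqrt ((d i + d j - 2) / (d i * d j)) * sqrt (d j) = sqrt (d i + d j - 2) / sqrt (d i)"
      by (metis real_sqrt_mult real_sqrt_divide)
    then show ?thesis using that by (simp add: Mij w_def)
  qed
  define f where "f j = \<bar>x$j\<bar> / w j" for j
  define r where "r = Max (range f)"
  have fle: "f j \<le> r" for j unfolding r_def by (simp add: Max_ge)
  have "r \<in> range f" unfolding r_def by (intro Max_in) auto
  then obtain i where fi: "f i = r" by auto
  obtain j0 where "x$j0 \<noteq> 0" using xnz by (metis vec_eq_iff zero_index)
  then have "f j0 > 0" using wpos[of j0] by (simp add: f_def)
  then have rpos: "r > 0" using fle[of j0] by linarith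
  have xj: "\<bar>x$j\<bar> \<le> r * w j" for j
    using fle[of j] wpos[of j] by (simp add: f_def pos_divide_le_eq)
  have xi: "\<bar>x$i\<bar> = r * w i" using fi wpos[of i] by (simp add: f_def divide_eq_eq)
  have eqi: "\<mu> * x$i = (\<Sum>j\<in>UNIV. M$i$j * x$j)"
  proof -
    have "(M *v x)$i = (\<mu> *\<^sub>R x)$i" using ev M_def by simp
    then show ?thesis by (simp add: matrix_vector_mult_def)
  qed
  have "\<bar>\<mu>\<bar> * \<bar>x$i\<bar> = \<bar>\<Sum>j\<in>UNIV. M$i$j * x$j\<bar>" using eqi by (metis abs_mult)
  also have "\<dots> \<le> (\<Sum>j\<in>UNIV. \<bar>M$i$j * x$j\<bar>)" by (rule sum_abs)
  also have "\<dots> = (\<Sum>j\<in>UNIV. M$i$j * \<bar>x$j\<bar>)" using Mnn by (simp add: abs_mult)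
  also have "\<dots> \<le> (\<Sum>j\<in>UNIV. M$i$j * (r * w j))"
    by (intro sum_mono mult_left_mono xj Mnn)
  also have "\<dots> = r * (\<Sum>j\<in>UNIV. M$i$j * w j)"
    by (simp add: sum_distrib_left algebra_simps)
  finally have "r * (\<bar>\<mu>\<bar> * w i) \<le> r * (\<Sum>j\<in>UNIV. M$i$j * w j)" using xi by (simp add: algebra_simps)
  then have A1: "\<bar>\<mu>\<bar> * w i \<le> (\<Sum>j\<in>UNIV. M$i$j * w j)" using rpos by simp
  define a where "a j = d i + d j - 2" for j
  have a0: "a j \<ge> 0" for j using d1[of i] d1[of j] by (simp add: a_def)
  have "(\<Sum>j\<in>UNIV. M$i$j * w j) = (\<Sum>j\<in>UNIV. if E i j then sqrt (a j) / w i else 0)"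
  proof (rule sum.cong)
    fix j show "M$i$j * w j = (if E i j then sqrt (a j) / w i else 0)"
      by (cases "E i j") (simp_all add: Mw a_def, simp add: Mij)
  qed simp
  also have "\<dots> = (\<Sum>j\<in>N i. sqrt (a j) / w i)"
    by (simp add: sum.inter_filter[symmetric] N_def)
  also have "\<dots> = (\<Sum>j\<in>N i. sqrt (a j)) / w i" by (simp add: sum_divide_distrib)
  finally have "\<bar>\<mu>\<bar> * w i \<le> (\<Sum>j\<in>N i. sqrt (a j)) / w i" using A1 by simp
  then have "\<bar>\<mu>\<bar> * w i * w i \<le> (\<Sum>j\<in>N i. sqrt (a j))" using wpos[of i] by (simp add: pos_le_divide_eq)
  then have A2: "\<bar>\<mu>\<bar> * d i \<le> (\<Sum>j\<in>N i. sqrt (a j))" using ww[of i] by (simp add: mult.assoc)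
  have cardN: "real (card (N i)) = d i" by (simp add: N_def d_def degree_def)
  have "(\<bar>\<mu>\<bar> * d i)^2 \<le> (\<Sum>j\<in>N i. sqrt (a j))^2"
    using A2 d1[of i] by (intro power_mono) auto
  also have "\<dots> \<le> (\<Sum>j\<in>N i. (sqrt (a j))^2) * real (card (N i))" by (rule sum_squared_le_sum_of_squares)
  also have "\<dots> = (\<Sum>j\<in>N i. a j) * d i" using a0 cardN by simp
  finally have A3: "\<mu>^2 * d i * d i \<le> (\<Sum>j\<in>N i. a j) * d i" by (simp add: power2_eq_square algebra_simps)
  then have A4: "\<mu>^2 * d i \<le> (\<Sum>j\<in>N i. a j)" using d1[of i] by simp
  define s where "s = (\<Sum>j\<in>N i. d j)"
  have suma: "(\<Sum>j\<in>N i. a j) = d i * (d i - 2) + s"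
    unfolding a_def s_def by (simp add: sum.distrib cardN algebra_simps sum_subtractf)
  have s1: "s \<le> d i * (n - 1)"
  proof -
    have "s \<le> real (card (N i)) * (n - 1)" unfolding s_def by (rule sum_bounded_above) (use dn in auto)
    then show ?thesis using cardN by simp
  qed
  define R where "R = UNIV - N i - {i}"
  have iN: "i \<notin> N i" using sg by (simp add: N_def simple_graph_def)
  have decomp: "(\<Sum>j\<in>UNIV. g j) = (\<Sum>j\<in>N i. g j) + g i + (\<Sum>j\<in>R. g j)" for g :: "'n \<Rightarrow> real"
  proof -
    have "(\<Sum>j\<in>UNIV. g j) = (\<Sum>j\<in>UNIV - N i. g j) + (\<Sum>j\<in>N i. g j)"
      by (rule sum.subset_diff) auto
    moreover have "(\<Sum>j\<in>UNIV - N i. g j) = g i + (\<Sum>j\<in>R. g j)"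
      unfolding R_def using iN by (subst sum.remove[of _ i]) auto
    ultimately show ?thesis by simp
  qed
  have tot: "(\<Sum>j\<in>UNIV. d j) = 2 * m"
    using handshake[OF sg] unfolding d_def m_def by (metis of_nat_mult of_nat_numeral of_nat_sum)
  have "n = (\<Sum>j\<in>(UNIV::'n set). (1::real))" by (simp add: n_def)
  also have "\<dots> = d i + 1 + (\<Sum>j\<in>R. 1)" using decomp[of "\<lambda>_. 1"] cardN by simp
  finally have n_eq: "n = d i + 1 + (\<Sum>j\<in>R. 1)" .
  have "(\<Sum>j\<in>R. (1::real)) \<le> (\<Sum>j\<in>R. d j)" by (intro sum_mono d1)
  moreover have "2 * m = s + d i + (\<Sum>j\<in>R. d j)" using decomp[of d] tot s_def by simp
  ultimately have s2: "s \<le> 2 * m - n + 1" using n_eq by linarith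
  have n3r: "n \<ge> 3" using n3 unfolding n_def by simp
  have "d i * (d i - 2) + s \<le> (n - 2 + 2 * (m - n + 1) / (n - 1)) * d i"
    by (rule alg[OF d1 dn n3r s1 s2])
  then have "\<mu>^2 * d i \<le> (n - 2 + 2 * (m - n + 1) / (n - 1)) * d i" using A4 suma by linarith
  then have "\<mu>^2 \<le> n - 2 + 2 * (m - n + 1) / (n - 1)" using d1[of i] by simp
  then have "\<bar>\<mu>\<bar> \<le> sqrt (n - 2 + 2 * (m - n + 1) / (n - 1))" by (intro real_le_rsqrt) simp
  then show ?thesis unfolding n_def m_def by linarith
qed

theorem corollary2p2:
  fixes E :: "'n::finite \<Rightarrow> 'n \<Rightarrow> bool"
  assumes "simple_graph E" and "connected_graph E"
    and "CARD('n) \<ge> 3"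
    and "real (num_edges E) - real CARD('n) + 1 \<le> (real CARD('n) - 1) / 2"
  shows "abc_spectral_radius E \<le>
    sqrt (real CARD('n) - 2 + 2 * (real (num_edges E) - real CARD('n) + 1) / (real CARD('n) - 1))"
proof -
  define S where "S = eigenvalues (abc_matrix E)"
  have esym: "E i j \<longleftrightarrow> E j i" for i j using assms(1) by (auto simp: simple_graph_def)
  have sym: "abc_matrix E $ i $ j = abc_matrix E $ j $ i" for i j
    unfolding abc_matrix_def using esym[of i j] by (simp add: algebra_simps)
  have fin: "finite S" unfolding S_def by (rule sym_eig_finite[OF sym])
  have ne: "S \<noteq> {}" using sym_eig_exists[OF sym] unfolding S_def eigenvalues_def by blast
  have "Max S \<in> S" using fin ne by (rule Max_in)
  then obtain x where "x \<noteq> 0" "abc_matrix E *v x = Max S *\<^sub>R x"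
    unfolding S_def eigenvalues_def by blast
  then have "Max S \<le> sqrt (real CARD('n) - 2 + 2 * (real (num_edges E) - real CARD('n) + 1) / (real CARD('n) - 1))"
    using eig_bound[OF assms(1,2,3)] by blast
  then show ?thesis unfolding abc_spectral_radius_def S_def .
qed

end
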